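(* Consider an EF neuron as in the context. Suppose (1) all input spikes are received within the input time window, i.e. $\mathcal F_i^{in}\subseteq\{0,\ldots,T^{in}-1\}$ for all $i\in\Gamma$, and (2) the neuron fires no output spike before the beginning of its output time window, i.e. $\mathcal F^{out}\cap\{0,\ldots,T^{in}-2\}=\emptyset$. For each $i\in\Gamma$ let $\tilde a_i=\sum_{t\in\mathcal F_i^{in}}2^{e^{in}_{max}-t}$ be the value encoded by the $i$-th input LTC spike train, and let $y=\max\big(\sum_{i\in\Gamma}w_i\tilde a_i,\,0\big)$ (the output of an analog ReLU neuron with inputs $\tilde a_i$ and weights $w_i$). Let $S\subseteq\{0,\ldots,T^{out}-1\}$ be the set of spike times of the LTC spike train of $y$ with output exponent range $\{e^{out}_{min},\ldots,e^{out}_{max}\}$ (multi-spike LTC for a multi-spike EF neuron, single-spike LTC for a single-spike EF neuron). Then $\mathcal F^{out}\cap\{T^{in}-1,\ldots,T^{in}+T^{out}-2\}=\{T^{in}-1+s: s\in S\}$.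
   Context: Exponentiate-and-Fire (EF) neuron (discrete time $t\in\mathbb Z$). Fix integers $e^{in}_{min}\le e^{in}_{max}$ (input exponent range), $T^{in}=e^{in}_{max}-e^{in}_{min}+1$ (input time window $\{0,\ldots,T^{in}-1\}$), and integers $e^{out}_{min}\le e^{out}_{max}$ (output exponent range), $T^{out}=e^{out}_{max}-e^{out}_{min}+1$. The output time window is $\{T^{in}-1,\ldots,T^{in}+T^{out}-2\}$. The firing threshold is $V_{th}=2^{e^{out}_{max}}$. The neuron has a finite set $\Gamma$ of synapses with real weights $w_i$, and for each $i\in\Gamma$ a finite set $\mathcal F_i^{in}\subseteq\{0,1,2,\ldots\}$ of input spike times. PSP kernel: $\epsilon(s)=2^{e^{in}_{min}}\cdot 2^{s}\cdot\mathbb 1(s\ge 0)$; total PSP $h_i(t)=\sum_{t^{in}\in\mathcal F_i^{in}}\epsilon(t-t^{in})$. With $\mathcal F^{out}\subseteq\mathbb Z$ the set of output spike times and $\eta$ the afterhyperpolarizing kernel, the membrane potential is $V_m(t)=\sum_{i\in\Gamma}w_i h_i(t)+\sum_{t^{out}\in\mathcal F^{out}}\eta(t-t^{out})\,\mathbb 1(t\ge t^{out})$ and the pre-reset membrane potential is $V_m^-(t)=V_m(t)-\eta(0)\,\mathbb 1(t\in\mathcal F^{out})$ (which depends only on output spikes at times $<t$). Output spikes are generated recursively in time: $t\in\mathcal F^{out}$ if and only if $V_m^-(t)\ge V_{th}$ (so no output spikes occur at negative times, where $V_m^-=0$). For a multi-spike EF neuron, the output spike at $t^{out}$ contributes $\eta(s)=-V_{th}\cdot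 2^{s}$ (reset by subtraction); for a single-spike EF neuron it contributes $\eta(s)=-V_m^-(t^{out})\cdot 2^{s}$ (reset to zero). Logarithmic approximation and LTC, for integers $e_{min}\le e_{max}$ and real $a$: the multi-power LA is $\tilde a=0$ if $a<2^{e_{min}}$, $\tilde a=\lfloor a/2^{e_{min}}\rfloor 2^{e_{min}}$ if $2^{e_{min}}\le a<2^{e_{max}+1}$, $\tilde a=2^{e_{max}+1}-2^{e_{min}}$ if $a\ge 2^{e_{max}+1}$. The single-power LA is $\tilde a=0$ if $a<2^{e_{min}}$, $\tilde a=2^{\lfloor\log_2 a\rfloor}$ if $2^{e_{min}}\le a<2^{e_{max}+1}$, $\tilde a=2^{e_{max}}$ if $a\ge 2^{e_{max}+1}$. Writing $\tilde a=\sum_{e\in E}2^e$ with distinct $E\subseteq\{e_{min},\ldots,e_{max}\}$, the LTC spike train of $a$ is the set of spike times $\{e_{max}-e: e\in E\}\subseteq\{0,\ldots,e_{max}-e_{min}\}$; it is called multi-spike LTC when multi-power LA is used and single-spike LTC when single-power LA is used. Conversely, a spike at time $t$ of an LTC spike train with exponent range $\{e_{min},\ldots,e_{max}\}$ represents $2^{e_{max}-t}$, and the train encodes the sum of these powers. *)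

theory Defs
  imports Complex_Main
begin

text \<open>Kind of EF neuron: multi-spike (reset by subtraction, multi-spike LTC)
  or single-spike (reset to zero, single-spike LTC).\<close>
datatype ef_kind = Multi | Single

definition psp :: "int \<Rightarrow> int \<Rightarrow> real" where
  "psp ein_min s = (if s \<ge> 0 then 2 powr real_of_int ein_min * 2 powr real_of_int s else 0)"

definition total_psp :: "int \<Rightarrow> int set \<Rightarrow> int \<Rightarrow> real" where
  "total_psp ein_min Fin t = (\<Sum>tin\<in>Fin. psp ein_min (t - tin))"

definition ahp :: "ef_kind \<Rightarrow> real \<Rightarrow> real \<Rightarrow> int \<Rightarrow> real" where
  "ahp k Vth vpre_tout s =
     (case k of Multi \<Rightarrow> - Vth * 2 powr real_of_int s
              | Single \<Rightarrow> - vpre_tout * 2 powr real_of_int s)"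

text \<open>V_m^-(t) only contains the afterhyperpolarizations of output spikes at times < t, and
  t is an output spike time iff V_m^-(t) >= V_th.  (This recursion determines Fout and
  Vpre uniquely.)\<close>
definition ef_neuron ::
  "ef_kind \<Rightarrow> int \<Rightarrow> real \<Rightarrow> 'a set \<Rightarrow> ('a \<Rightarrow> real) \<Rightarrow> ('a \<Rightarrow> int set)
     \<Rightarrow> int set \<Rightarrow> (int \<Rightarrow> real) \<Rightarrow> bool" where
  "ef_neuron k ein_min Vth Gamma w F Fout Vpre \<longleftrightarrow>
     (\<forall>t::int. Vpre t =
        (\<Sum>i\<in>Gamma. w i * total_psp ein_min (F i) t)
        + (\<Sum>tout\<in>{s\<in>Fout. s < t}. ahp k Vth (Vpre tout) (t - tout)))
   \<and> (\<forall>t::int. t \<in> Fout \<longleftrightarrow> Vpre t \<ge> Vth)"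

definition multi_LA :: "int \<Rightarrow> int \<Rightarrow> real \<Rightarrow> real" where
  "multi_LA emin emax a =
     (if a < 2 powr real_of_int emin then 0
      else if a < 2 powr real_of_int (emax + 1)
        then real_of_int \<lfloor>a / 2 powr real_of_int emin\<rfloor> * 2 powr real_of_int emin
      else 2 powr real_of_int (emax + 1) - 2 powr real_of_int emin)"

definition single_LA :: "int \<Rightarrow> int \<Rightarrow> real \<Rightarrow> real" where
  "single_LA emin emax a =
     (if a < 2 powr real_of_int emin then 0
      else if a < 2 powr real_of_int (emax + 1)
        then 2 powr real_of_int \<lfloor>log 2 a\<rfloor>
      else 2 powr real_of_int emax)"

definition ltc_of_approx :: "int \<Rightarrow> int \<Rightarrow> real \<Rightarrow> int set" where
  "ltc_of_approx emin emax v =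
     (\<lambda>e. emax - e) ` (THE E. E \<subseteq> {emin..emax} \<and> v = (\<Sum>e\<in>E. 2 powr real_of_int e))"

definition ltc :: "ef_kind \<Rightarrow> int \<Rightarrow> int \<Rightarrow> real \<Rightarrow> int set" where
  "ltc k emin emax a =
     ltc_of_approx emin emax
       (case k of Multi \<Rightarrow> multi_LA emin emax a | Single \<Rightarrow> single_LA emin emax a)"

definition ltc_value :: "int \<Rightarrow> int set \<Rightarrow> real" where
  "ltc_value emax S = (\<Sum>t\<in>S. 2 powr real_of_int (emax - t))"

end

theory Submission
  imports Defs
begin


lemma pow_sum_lt:
  assumes "finite E" "E \<subseteq> {..<m}"
  shows "(\<Sum>e\<in>E. 2 powr real_of_int e) < 2 powr real_of_int (m::int)"
  using assms
proof (induction "card E" arbitrary: E m rule: less_induct)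
  case less
  show ?case
  proof (cases "E = {}")
    case True thus ?thesis by simp
  next
    case False
    define x where "x = Max E"
    have xE: "x \<in> E" using False less.prems x_def by simp
    have xm: "x < m" using xE less.prems by auto
    have F: "E - {x} \<subseteq> {..<x}" using less.prems x_def
      by (auto simp: less_le)
    have "card (E - {x}) < card E" by (rule card_Diff1_less[OF less.prems(1) xE])
    then have IH: "(\<Sum>e\<in>E-{x}. 2 powr real_of_int e) < 2 powr real_of_int x"
      using less.hyps[of "E - {x}" x] less.prems F by auto
    have "(\<Sum>e\<in>E. 2 powr real_of_int e) = 2 powr real_of_int x + (\<Sum>e\<in>E-{x}. 2 powr real_of_int e)"
      by (simp add: sum.remove[OF less.prems(1) xE])
    also have "\<dots> < 2 powr real_of_int x + 2 powr real_of_int x" using IH by simp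
    also have "\<dots> = 2 powr real_of_int (x+1)" by (simp add: powr_add)
    also have "\<dots> \<le> 2 powr real_of_int m" using xm by simp
    finally show ?thesis .
  qed
qed

lemma pow_sum_gt_aux:
  assumes "finite E1" "finite E2" "x \<in> E1" "x \<notin> E2" "\<forall>y>x. y \<in> E1 \<longleftrightarrow> y \<in> E2"
  shows "(\<Sum>e\<in>E2. 2 powr real_of_int e) < (\<Sum>e\<in>E1. 2 powr real_of_int (e::int))"
proof -
  define H where "H = {y\<in>E1. y > x}"
  define L where "L = {y\<in>E2. y < x}"
  have H2: "H = {y\<in>E2. y > x}" using assms(5) H_def by auto
  have E2: "E2 = H \<union> L" using H2 L_def assms(4) by (auto simp: neq_iff)
  have fH: "finite H" "finite L" using assms(1,2) H_def L_def by auto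
  have "(\<Sum>e\<in>E2. 2 powr real_of_int e) = (\<Sum>e\<in>H. 2 powr real_of_int e) + (\<Sum>e\<in>L. 2 powr real_of_int e)"
    unfolding E2 by (rule sum.union_disjoint) (use fH H_def L_def in auto)
  also have "\<dots> < (\<Sum>e\<in>H. 2 powr real_of_int e) + 2 powr real_of_int x"
    using pow_sum_lt[OF fH(2), of x] L_def by auto
  also have "\<dots> = (\<Sum>e\<in>insert x H. 2 powr real_of_int e)"
    using fH H_def by simp
  also have "\<dots> \<le> (\<Sum>e\<in>E1. 2 powr real_of_int e)"
    by (rule sum_mono2) (use assms H_def in auto)
  finally show ?thesis .
qed

lemma pow_sum_inj:
  assumes "finite E1" "finite E2"
    "(\<Sum>e\<in>E1. 2 powr real_of_int e) = (\<Sum>e\<in>E2. 2 powr real_of_int (e::int))"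
  shows "E1 = E2"
proof (rule ccontr)
  assume ne: "E1 \<noteq> E2"
  define D where "D = (E1 - E2) \<union> (E2 - E1)"
  have "D \<noteq> {}" using ne D_def by auto
  moreover have fD: "finite D" using assms D_def by auto
  ultimately have xD: "Max D \<in> D" by simp
  define x where "x = Max D"
  have above: "\<forall>y>x. y \<in> E1 \<longleftrightarrow> y \<in> E2"
  proof (intro allI impI)
    fix y assume "y > x"
    then have "y \<notin> D" using fD x_def Max_ge by fastforce
    then show "y \<in> E1 \<longleftrightarrow> y \<in> E2" using D_def by auto
  qed
  have "x \<in> E1 - E2 \<or> x \<in> E2 - E1" using xD x_def D_def by auto
  then show False
  proof
    assume "x \<in> E1 - E2"
    then show False using pow_sum_gt_aux[OF assms(1,2), of x] above assms(3) by auto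
  next
    assume "x \<in> E2 - E1"
    then show False using pow_sum_gt_aux[OF assms(2,1), of x] above assms(3) by auto
  qed
qed

lemma ltc_of_approx_sum:
  assumes "E \<subseteq> {emin..emax}"
  shows "ltc_of_approx emin emax (\<Sum>e\<in>E. 2 powr real_of_int e) = (\<lambda>e. emax - e) ` E"
proof -
  have fE: "finite E" using assms finite_subset by blast
  have "(THE E'. E' \<subseteq> {emin..emax} \<and> (\<Sum>e\<in>E. 2 powr real_of_int e) = (\<Sum>e\<in>E'. 2 powr real_of_int e)) = E"
  proof (rule the_equality)
    fix E' assume h: "E' \<subseteq> {emin..emax} \<and> (\<Sum>e\<in>E. 2 powr real_of_int e) = (\<Sum>e\<in>E'. 2 powr real_of_int e)"
    then have "finite E'" using finite_subset by blast
    then show "E' = E" using pow_sum_inj[OF fE] h by metis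
  next
    show "E \<subseteq> {emin..emax} \<and> (\<Sum>e\<in>E. 2 powr real_of_int e) = (\<Sum>e\<in>E. 2 powr real_of_int e)"
      using assms by blast
  qed
  then show ?thesis unfolding ltc_of_approx_def by (simp only:)
qed



lemma P_Suc:
  "(\<Sum>j\<in>J\<inter>{..<Suc n}. f j) = (\<Sum>j\<in>J\<inter>{..<n}. f j) + (if n \<in> J then f n else (0::real))"
proof (cases "n \<in> J")
  case True
  then have "J\<inter>{..<Suc n} = insert n (J\<inter>{..<n})" by auto
  then show ?thesis using True by simp
next
  case False
  then have "J\<inter>{..<Suc n} = J\<inter>{..<n}" by (auto simp: less_Suc_eq)
  then show ?thesis using False by simp
qed

lemma pw2: "2 powr real_of_int (a + 1) = 2 * 2 powr real_of_int (a::int)"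
  by (simp add: powr_add)

lemma multi_core:
  fixes J :: "nat set" and A :: real and emin emax :: int
  assumes le: "emin \<le> emax"
    and key: "\<And>n. n \<in> J \<longleftrightarrow> 2 powr real_of_int (emax - int n) \<le> A - (\<Sum>j\<in>J\<inter>{..<n}. 2 powr real_of_int (emax - int j))"
  shows "multi_LA emin emax (max A 0) = (\<Sum>j\<in>J\<inter>{..<nat(emax-emin+1)}. 2 powr real_of_int (emax - int j))"
proof -
  define P where "P n = (\<Sum>j\<in>J\<inter>{..<n}. 2 powr real_of_int (emax - int j))" for n
  define T where "T = nat(emax-emin+1)"
  have T: "int T = emax - emin + 1" using le T_def by simp
  have PS: "P (Suc n) = P n + (if n \<in> J then 2 powr real_of_int (emax - int n) else 0)" for n
    unfolding P_def by (rule P_Suc)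
  have key': "n \<in> J \<longleftrightarrow> 2 powr real_of_int (emax - int n) \<le> A - P n" for n
    unfolding P_def by (rule key)
  consider (a) "A < 2 powr real_of_int emin" | (b) "2 powr real_of_int (emax+1) \<le> A"
    | (c) "2 powr real_of_int emin \<le> A" "A < 2 powr real_of_int (emax+1)" by (meson not_le)
  then have "multi_LA emin emax (max A 0) = P T"
  proof cases
    case a
    have "n \<le> T \<longrightarrow> P n = 0" for n
    proof (induction n)
      case 0 then show ?case by (simp add: P_def)
    next
      case (Suc n)
      show ?case
      proof
        assume "Suc n \<le> T"
        then have "emin \<le> emax - int n" using T by linarith
        then have "2 powr real_of_int emin \<le> 2 powr real_of_int (emax - int n)" by simp
        moreover have "P n = 0" using Suc \<open>Suc n \<le> T\<close> by simp
        ultimately have "n \<notin> J" using key'[of n] a by linarith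
        then show "P (Suc n) = 0" using PS \<open>P n = 0\<close> by simp
      qed
    qed
    then have "P T = 0" by simp
    moreover have "max A 0 < 2 powr real_of_int emin" using a by simp
    ultimately show ?thesis unfolding multi_LA_def by simp
  next
    case b
    have Pn: "P n = 2 powr real_of_int (emax+1) - 2 powr real_of_int (emax + 1 - int n)" for n
    proof (induction n)
      case 0 then show ?case by (simp add: P_def)
    next
      case (Suc n)
      have e: "2 powr real_of_int (emax + 1 - int n) = 2 * 2 powr real_of_int (emax - int n)"
        using pw2[of "emax - int n"] by (simp add: algebra_simps)
      have "A - P n \<ge> 2 powr real_of_int (emax + 1 - int n)" using Suc b by simp
      moreover have "2 powr real_of_int (emax - int n) > 0" by simp
      ultimately have "n \<in> J" using key'[of n] e by linarith
      then show ?case using PS[of n] Suc e by (simp add: algebra_simps)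
    qed
    have "2 powr real_of_int (emax+1) > 0" by simp
    then have "A > 0" using b by linarith
    then have mx: "max A 0 = A" by simp
    have eT: "emax + 1 - int T = emin" using T by simp
    have PT: "P T = 2 powr real_of_int (emax+1) - 2 powr real_of_int emin" by (rule Pn[of T, unfolded eT])
    have "2 powr real_of_int emin \<le> 2 powr real_of_int (emax+1)" using le by simp
    then have h1: "\<not> A < 2 powr real_of_int emin" using b by linarith
    have h2: "\<not> A < 2 powr real_of_int (emax+1)" using b by linarith
    show ?thesis unfolding multi_LA_def mx PT using h1 h2 by (simp only: if_False)
  next
    case c
    have inv: "0 \<le> A - P n \<and> A - P n < 2 powr real_of_int (emax + 1 - int n)" for n
    proof (induction n)
      case 0 then show ?case using c by (simp add: P_def) (smt (verit) powr_gt_zero)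
    next
      case (Suc n)
      have e: "2 powr real_of_int (emax + 1 - int n) = 2 * 2 powr real_of_int (emax - int n)"
        using pw2[of "emax - int n"] by (simp add: algebra_simps)
      have e2: "emax + 1 - int (Suc n) = emax - int n" by simp
      show ?case
      proof (cases "n \<in> J")
        case True
        then show ?thesis using key'[of n] PS[of n] Suc e unfolding e2 by simp
      next
        case False
        then show ?thesis using key'[of n] PS[of n] Suc unfolding e2 by simp
      qed
    qed
    define K where "K = (\<Sum>j\<in>J\<inter>{..<T}. (2::int) ^ nat (emax - emin - int j))"
    have PK: "P T = 2 powr real_of_int emin * real_of_int K"
      unfolding P_def K_def of_int_sum sum_distrib_left
    proof (rule sum.cong)
      fix j assume "j \<in> J \<inter> {..<T}"
      then have nn: "0 \<le> emax - emin - int j" using T by auto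
      have "2 powr real_of_int (emax - int j) = 2 powr real_of_int emin * 2 powr real_of_int (emax - emin - int j)"
        by (simp add: powr_add[symmetric])
      also have "2 powr real_of_int (emax - emin - int j) = 2 powr real (nat (emax - emin - int j))"
        using nn by simp
      also have "\<dots> = 2 ^ nat (emax - emin - int j)" by (simp add: powr_realpow)
      finally show "2 powr real_of_int (emax - int j) = 2 powr real_of_int emin * real_of_int (2 ^ nat (emax - emin - int j))"
        by simp
    qed simp
    have eT: "emax + 1 - int T = emin" using T by simp
    have g: "2 powr real_of_int emin > 0" by simp
    have fl: "\<lfloor>A / 2 powr real_of_int emin\<rfloor> = K"
    proof (rule floor_unique)
      have "0 \<le> A - P T" "A - P T < 2 powr real_of_int emin" using inv[of T] eT by auto
      then have "P T \<le> A" "A < P T + 2 powr real_of_int emin" by auto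
      then show "real_of_int K \<le> A / 2 powr real_of_int emin"
        "A / 2 powr real_of_int emin < real_of_int K + 1"
        unfolding PK using g by (simp_all add: field_simps)
    qed
    have "A > 0" using c g by linarith
    then have mx: "max A 0 = A" by simp
    show ?thesis using c unfolding multi_LA_def mx fl PK by simp
  qed
  then show ?thesis unfolding P_def T_def .
qed



lemma single_core:
  fixes J :: "nat set" and A :: real and emin emax :: int
  assumes le: "emin \<le> emax"
    and key: "\<And>n. n \<in> J \<longleftrightarrow> (2 powr real_of_int (emax - int n) \<le> A \<and> (\<forall>m<n. A < 2 powr real_of_int (emax - int m)))"
  shows "single_LA emin emax (max A 0) = (\<Sum>j\<in>J\<inter>{..<nat(emax-emin+1)}. 2 powr real_of_int (emax - int j))"
proof -
  define T where "T = nat(emax-emin+1)"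
  have T: "int T = emax - emin + 1" using le T_def by simp
  consider (a) "A < 2 powr real_of_int emin" | (b) "2 powr real_of_int (emax+1) \<le> A"
    | (c) "2 powr real_of_int emin \<le> A" "A < 2 powr real_of_int (emax+1)" by (meson not_le)
  then have "single_LA emin emax (max A 0) = (\<Sum>j\<in>J\<inter>{..<T}. 2 powr real_of_int (emax - int j))"
  proof cases
    case a
    have "J \<inter> {..<T} = {}"
    proof (rule ccontr)
      assume "J \<inter> {..<T} \<noteq> {}"
      then obtain n where n: "n \<in> J" "n < T" by auto
      then have "emin \<le> emax - int n" using T by linarith
      then have "2 powr real_of_int emin \<le> 2 powr real_of_int (emax - int n)" by simp
      then show False using key[of n] n a by linarith
    qed
    moreover have "max A 0 < 2 powr real_of_int emin" using a by simp
    ultimately show ?thesis unfolding single_LA_def by simp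
  next
    case b
    have p: "2 powr real_of_int emax \<le> 2 powr real_of_int (emax+1)" by simp
    have "J \<inter> {..<T} = {0}"
    proof -
      have "0 \<in> J" using key[of 0] b p by simp
      moreover have "n \<notin> J" if "n > 0" for n
      proof -
        have "\<not> A < 2 powr real_of_int emax" using b p by linarith
        then have "\<not> A < 2 powr real_of_int (emax - int 0)" by simp
        then show ?thesis using key[of n] that by blast
      qed
      moreover have "0 < T" using T le by linarith
      ultimately show ?thesis by auto
    qed
    moreover have "2 powr real_of_int (emax+1) > 0" by simp
    then have "A > 0" using b by linarith
    then have mx: "max A 0 = A" by simp
    moreover have "2 powr real_of_int emin \<le> 2 powr real_of_int (emax+1)" using le by simp
    then have h1: "\<not> A < 2 powr real_of_int emin" using b by linarith
    moreover have h2: "\<not> A < 2 powr real_of_int (emax+1)" using b by linarith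
    ultimately show ?thesis unfolding single_LA_def by simp
  next
    case c
    have A0: "A > 0" using c(1) by (smt (verit) powr_gt_zero)
    define f where "f = \<lfloor>log 2 A\<rfloor>"
    have lo: "2 powr real_of_int f \<le> A"
    proof -
      have "2 powr real_of_int f \<le> 2 powr (log 2 A)" unfolding f_def by simp
      also have "\<dots> = A" using A0 by simp
      finally show ?thesis .
    qed
    have hi: "A < 2 powr real_of_int (f+1)"
    proof -
      have "A = 2 powr (log 2 A)" using A0 by simp
      also have "\<dots> < 2 powr real_of_int (f+1)" unfolding f_def
        by (simp add: real_of_int_floor_add_one_gt)
      finally show ?thesis .
    qed
    have iff: "2 powr real_of_int (emax - int n) \<le> A \<longleftrightarrow> emax - int n \<le> f" for n
    proof
      assume h: "2 powr real_of_int (emax - int n) \<le> A"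
      show "emax - int n \<le> f"
      proof (rule ccontr)
        assume "\<not> emax - int n \<le> f"
        then have "f + 1 \<le> emax - int n" by simp
        then have "2 powr real_of_int (f+1) \<le> 2 powr real_of_int (emax - int n)" by simp
        then show False using h hi by linarith
      qed
    next
      assume "emax - int n \<le> f"
      then have "2 powr real_of_int (emax - int n) \<le> 2 powr real_of_int f" by simp
      then show "2 powr real_of_int (emax - int n) \<le> A" using lo by linarith
    qed
    have "2 powr real_of_int emin < 2 powr real_of_int (f+1)" using c hi by linarith
    then have fmin: "emin \<le> f" by simp
    have "2 powr real_of_int f < 2 powr real_of_int (emax+1)" using c lo by linarith
    then have fmax: "f \<le> emax" by simp
    define n0 where "n0 = nat (emax - f)"
    have n0: "int n0 = emax - f" using fmax n0_def by simp
    have "J \<inter> {..<T} = {n0}"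
    proof -
      have "n \<in> J \<longleftrightarrow> n = n0" for n
      proof -
        have "n \<in> J \<longleftrightarrow> (emax - int n \<le> f \<and> (\<forall>m<n. \<not> emax - int m \<le> f))"
          using key[of n] iff by (simp add: not_le[symmetric])
        also have "\<dots> \<longleftrightarrow> n = n0" using n0 by (auto; presburger)
        finally show ?thesis .
      qed
      moreover have "n0 < T" using n0 T fmin by linarith
      ultimately show ?thesis by auto
    qed
    moreover have "max A 0 = A" using A0 by simp
    moreover have "emax - int n0 = \<lfloor>log 2 A\<rfloor>" using n0 f_def by simp
    ultimately show ?thesis using c unfolding single_LA_def by simp
  qed
  then show ?thesis unfolding T_def .
qed

lemma ltc_from_sum:
  assumes "LA = (\<Sum>j\<in>J\<inter>{..<nat(emax-emin+1)}. 2 powr real_of_int (emax - int j))" "emin \<le> emax"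
  shows "ltc_of_approx emin emax LA = int ` (J\<inter>{..<nat(emax-emin+1)})"
proof -
  define T where "T = nat(emax-emin+1)"
  define E where "E = (\<lambda>j. emax - int j) ` (J\<inter>{..<T})"
  have inj: "inj_on (\<lambda>j. emax - int j) (J\<inter>{..<T})" by (auto simp: inj_on_def)
  have "(\<Sum>e\<in>E. 2 powr real_of_int e) = (\<Sum>j\<in>J\<inter>{..<T}. 2 powr real_of_int (emax - int j))"
    unfolding E_def by (subst sum.reindex[OF inj]) simp
  then have "LA = (\<Sum>e\<in>E. 2 powr real_of_int e)" using assms(1) T_def by simp
  moreover have "E \<subseteq> {emin..emax}" unfolding E_def T_def using assms(2) by auto
  ultimately have "ltc_of_approx emin emax LA = (\<lambda>e. emax - e) ` E"
    using ltc_of_approx_sum by simp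
  also have "\<dots> = int ` (J\<inter>{..<T})" unfolding E_def image_image by simp
  finally show ?thesis unfolding T_def .
qed


lemma div_pow: "(2 powr real_of_int e \<le> 2 powr real n * X) = (2 powr real_of_int (e - int n) \<le> (X::real))"
proof -
  have "2 powr real_of_int (e - int n) = 2 powr real_of_int e / 2 powr real n" by (simp add: powr_diff)
  then show ?thesis by (simp add: pos_divide_le_eq mult.commute)
qed

theorem theorem1:
  fixes k :: ef_kind
    and ein_min ein_max eout_min eout_max :: int
    and Gamma :: "'a set" and w :: "'a \<Rightarrow> real" and F :: "'a \<Rightarrow> int set"
    and Fout :: "int set" and Vpre :: "int \<Rightarrow> real"
  assumes "ein_min \<le> ein_max" and "eout_min \<le> eout_max"
    and "finite Gamma"
    and "\<forall>i\<in>Gamma. F i \<subseteq> {0 .. ein_max - ein_min}"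
    and "ef_neuron k ein_min (2 powr real_of_int eout_max) Gamma w F Fout Vpre"
    and "Fout \<inter> {0 .. (ein_max - ein_min + 1) - 2} = {}"
  shows "Fout \<inter> {(ein_max - ein_min + 1) - 1 .. (ein_max - ein_min + 1) + (eout_max - eout_min + 1) - 2}
         = (\<lambda>s. (ein_max - ein_min + 1) - 1 + s) `
             ltc k eout_min eout_max
               (max (\<Sum>i\<in>Gamma. w i * ltc_value ein_max (F i)) 0)"
proof -
  define Vth where "Vth = 2 powr real_of_int eout_max"
  define t0 where "t0 = ein_max - ein_min"
  define A where "A = (\<Sum>i\<in>Gamma. w i * ltc_value ein_max (F i))"
  define inp where "inp t = (\<Sum>i\<in>Gamma. w i * total_psp ein_min (F i) t)" for t
  define T where "T = nat (eout_max - eout_min + 1)"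
  have T: "int T = eout_max - eout_min + 1" using assms(2) T_def by simp
  have t0: "t0 \<ge> 0" using assms(1) t0_def by simp
  have Vth: "Vth > 0" unfolding Vth_def by simp
  have conj: "(\<forall>t. Vpre t = inp t + (\<Sum>tout\<in>{s\<in>Fout. s < t}. ahp k Vth (Vpre tout) (t - tout)))
     \<and> (\<forall>t. t \<in> Fout \<longleftrightarrow> Vth \<le> Vpre t)"
    using assms(5) unfolding ef_neuron_def inp_def Vth_def by blast
  have VP: "\<And>t. Vpre t = inp t + (\<Sum>tout\<in>{s\<in>Fout. s < t}. ahp k Vth (Vpre tout) (t - tout))"
    using conj by blast
  have FO: "\<And>t. t \<in> Fout \<longleftrightarrow> Vth \<le> Vpre t"
    using conj by blast
  have inp_neg: "inp t = 0" if "t < 0" for t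
  proof -
    have "total_psp ein_min (F i) t = 0" if "i \<in> Gamma" for i
      unfolding total_psp_def
    proof (rule sum.neutral, rule ballI)
      fix tin assume "tin \<in> F i"
      then have "tin \<in> {0..ein_max - ein_min}" using assms(4) that by blast
      then have "tin \<ge> 0" by simp
      then show "psp ein_min (t - tin) = 0" using \<open>t < 0\<close> unfolding psp_def by simp
    qed
    then show ?thesis unfolding inp_def by simp
  qed
  have noneg: "x \<notin> Fout" if "x < 0" for x
  proof
    assume xF: "x \<in> Fout"
    define N where "N = {s\<in>Fout. s < x}"
    show False
    proof (cases "finite N \<and> N \<noteq> {}")
      case True
      define m where "m = Min N"
      have mN: "m \<in> N" using True m_def by simp
      have Em: "{s\<in>Fout. s < m} = {}"
      proof (rule ccontr)
        assume "{s\<in>Fout. s < m} \<noteq> {}"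
        then obtain s where "s \<in> Fout" "s < m" by auto
        moreover have "m < x" using mN N_def by simp
        ultimately have "s \<in> N" using N_def by simp
        then have "m \<le> s" using True m_def by simp
        then show False using \<open>s < m\<close> by simp
      qed
      moreover have "m < 0" using mN N_def that by simp
      then have "Vpre m = 0" using VP[of m] inp_neg[of m] unfolding Em by simp
      moreover have "m \<in> Fout" using mN N_def by simp
      ultimately show False using FO[of m] Vth by simp
    next
      case False
      then have "(\<Sum>tout\<in>N. ahp k Vth (Vpre tout) (x - tout)) = 0" by auto
      then have "Vpre x = 0" using VP[of x] inp_neg[OF that] N_def by simp
      then show False using FO[of x] Vth xF by simp
    qed
  qed
  have Fge: "t0 \<le> x" if "x \<in> Fout" for x
  proof (rule ccontr)
    assume "\<not> t0 \<le> x"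
    moreover have "0 \<le> x" using noneg that by force
    moreover have "ein_max - ein_min + 1 - 2 = t0 - 1" using t0_def by simp
    ultimately have "x \<in> {0 .. (ein_max - ein_min + 1) - 2}" by simp
    then show False using assms(6) that by blast
  qed
  define J where "J = {j::nat. t0 + int j \<in> Fout}"
  have setq: "{s\<in>Fout. s < t0 + int n} = (\<lambda>j. t0 + int j) ` (J \<inter> {..<n})" for n
  proof
    show "{s\<in>Fout. s < t0 + int n} \<subseteq> (\<lambda>j. t0 + int j) ` (J \<inter> {..<n})"
    proof
      fix s assume s: "s \<in> {s\<in>Fout. s < t0 + int n}"
      then have "t0 \<le> s" using Fge by simp
      then have "s = t0 + int (nat (s - t0))" by simp
      moreover have "nat (s - t0) \<in> J \<inter> {..<n}" using s \<open>t0 \<le> s\<close> J_def by auto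
      ultimately show "s \<in> (\<lambda>j. t0 + int j) ` (J \<inter> {..<n})" by blast
    qed
  qed (auto simp: J_def)
  have inp_pos: "inp (t0 + int n) = 2 powr real n * A" for n
  proof -
    have "total_psp ein_min (F i) (t0 + int n) = 2 powr real n * ltc_value ein_max (F i)"
      if "i \<in> Gamma" for i
      unfolding total_psp_def ltc_value_def sum_distrib_left
    proof (rule sum.cong)
      fix tin assume "tin \<in> F i"
      then have "tin \<in> {0..ein_max - ein_min}" using assms(4) that by blast
      then have "tin \<le> t0" using t0_def by simp
      then have "psp ein_min (t0 + int n - tin) = 2 powr real_of_int (ein_min + (t0 + int n - tin))"
        unfolding psp_def by (simp add: powr_add)
      also have "\<dots> = 2 powr real_of_int (int n + (ein_max - tin))"
        unfolding t0_def by (simp add: algebra_simps)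
      also have "\<dots> = 2 powr real n * 2 powr real_of_int (ein_max - tin)"
        by (simp add: powr_add[symmetric])
      finally show "psp ein_min (t0 + int n - tin) = 2 powr real n * 2 powr real_of_int (ein_max - tin)" .
    qed simp
    then show ?thesis unfolding inp_def A_def sum_distrib_left
      by (intro sum.cong) auto
  qed
  have inj: "inj_on (\<lambda>j. t0 + int j) X" for X by (auto simp: inj_on_def)
  have VF: "Vpre (t0 + int n) = 2 powr real n * A
      + (\<Sum>j\<in>J\<inter>{..<n}. ahp k Vth (Vpre (t0 + int j)) (int n - int j))" for n
    using VP[of "t0 + int n"] unfolding setq inp_pos
    by (subst (asm) sum.reindex[OF inj]) simp
  have window: "Fout \<inter> {t0 .. t0 + (eout_max - eout_min)} = (\<lambda>j. t0 + int j) ` (J \<inter> {..<T})"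
  proof
    show "Fout \<inter> {t0 .. t0 + (eout_max - eout_min)} \<subseteq> (\<lambda>j. t0 + int j) ` (J \<inter> {..<T})"
    proof
      fix s assume s: "s \<in> Fout \<inter> {t0 .. t0 + (eout_max - eout_min)}"
      then have "s = t0 + int (nat (s - t0))" by simp
      moreover have "nat (s - t0) \<in> J \<inter> {..<T}" using s J_def T by auto
      ultimately show "s \<in> (\<lambda>j. t0 + int j) ` (J \<inter> {..<T})" by blast
    qed
  qed (use J_def T in auto)
  have ltcJ: "ltc k eout_min eout_max (max A 0) = int ` (J \<inter> {..<T})"
  proof (cases k)
    case Multi
    have key: "n \<in> J \<longleftrightarrow> 2 powr real_of_int (eout_max - int n) \<le> A - (\<Sum>j\<in>J\<inter>{..<n}. 2 powr real_of_int (eout_max - int j))" for n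
    proof -
      have "(\<Sum>j\<in>J\<inter>{..<n}. ahp k Vth (Vpre (t0 + int j)) (int n - int j))
          = - (2 powr real n * (\<Sum>j\<in>J\<inter>{..<n}. 2 powr real_of_int (eout_max - int j)))"
        unfolding sum_distrib_left sum_negf[symmetric]
      proof (rule sum.cong)
        fix j assume "j \<in> J\<inter>{..<n}"
        have "Vth * 2 powr real_of_int (int n - int j) = 2 powr real_of_int (eout_max + (int n - int j))"
          unfolding Vth_def by (simp add: powr_add)
        also have "\<dots> = 2 powr real_of_int (int n + (eout_max - int j))" by (simp add: algebra_simps)
        also have "\<dots> = 2 powr real n * 2 powr real_of_int (eout_max - int j)"
          by (simp add: powr_add[symmetric])
        finally show "ahp k Vth (Vpre (t0 + int j)) (int n - int j) = - (2 powr real n * 2 powr real_of_int (eout_max - int j))"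
          unfolding ahp_def Multi by simp
      qed simp
      then have "Vpre (t0 + int n) = 2 powr real n * (A - (\<Sum>j\<in>J\<inter>{..<n}. 2 powr real_of_int (eout_max - int j)))"
        using VF[of n] by (simp add: algebra_simps)
      then show ?thesis using FO[of "t0 + int n"] div_pow unfolding J_def Vth_def by simp
    qed
    show ?thesis unfolding ltc_def Multi T_def
      by (simp add: ltc_from_sum[OF multi_core[OF assms(2) key] assms(2)])
  next
    case Single
    define q where "q m = (2 powr real_of_int (eout_max - int m) \<le> A)" for m :: nat
    have ind: "(n \<in> J \<longleftrightarrow> q n \<and> (\<forall>m<n. \<not> q m))
       \<and> Vpre (t0 + int n) = (if \<exists>m<n. q m then 0 else 2 powr real n * A)" for n
    proof (induction n rule: less_induct)
      case (less n)
      show ?case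
      proof (cases "\<exists>m<n. q m")
        case False
        have "J \<inter> {..<n} = {}" using less False by auto
        then have V: "Vpre (t0 + int n) = 2 powr real n * A" using VF[of n] by simp
        have "n \<in> J \<longleftrightarrow> q n" using FO[of "t0 + int n"] div_pow V
          unfolding J_def Vth_def q_def by simp
        then show ?thesis using False V by auto
      next
        case True
        define m0 where "m0 = (LEAST m. q m)"
        have qm0: "q m0" using True m0_def by (meson LeastI)
        have m0n: "m0 < n" using True m0_def by (meson Least_le le_less_trans)
        have nq: "\<not> q m" if "m < m0" for m using that m0_def not_less_Least by blast
        have Jn: "J \<inter> {..<n} = {m0}"
        proof -
          have "m \<in> J \<longleftrightarrow> m = m0" if "m < n" for m
          proof -
            have "m \<in> J \<longleftrightarrow> q m \<and> (\<forall>m'<m. \<not> q m')" using less that by blast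
            also have "\<dots> \<longleftrightarrow> m = m0"
              using qm0 nq by (metis linorder_neqE_nat)
            finally show ?thesis .
          qed
          then show ?thesis using m0n by auto
        qed
        have Vm0: "Vpre (t0 + int m0) = 2 powr real m0 * A"
          using less[OF m0n] nq by auto
        have "Vpre (t0 + int n) = 2 powr real n * A - Vpre (t0 + int m0) * 2 powr (real n - real m0)"
          using VF[of n] unfolding Jn ahp_def Single by simp
        also have "\<dots> = 0" unfolding Vm0
        proof -
          have "2 powr real m0 * 2 powr (real n - real m0) = 2 powr real n"
            by (simp add: powr_add[symmetric])
          then show "2 powr real n * A - 2 powr real m0 * A * 2 powr (real n - real m0) = 0"
            by (simp add: algebra_simps)
        qed
        finally have V: "Vpre (t0 + int n) = 0" .
        then have "n \<notin> J" using FO[of "t0 + int n"] Vth unfolding J_def by simp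
        then show ?thesis using True V by auto
      qed
    qed
    have key: "n \<in> J \<longleftrightarrow> (2 powr real_of_int (eout_max - int n) \<le> A \<and> (\<forall>m<n. A < 2 powr real_of_int (eout_max - int m)))" for n
      using ind[of n] unfolding q_def by (simp add: not_le)
    show ?thesis unfolding ltc_def Single T_def
      by (simp add: ltc_from_sum[OF single_core[OF assms(2) key] assms(2)])
  qed
  have e1: "ein_max - ein_min + 1 - 1 = t0" using t0_def by simp
  have e2: "ein_max - ein_min + 1 + (eout_max - eout_min + 1) - 2 = t0 + (eout_max - eout_min)"
    using t0_def by simp
  show ?thesis unfolding e1 e2 A_def[symmetric] ltcJ window image_image by simp
qed

end
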